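(* For every $n\ge1$ and every optimal $n$-town $S$, $\max\{w(S),h(S)\}\le 2\sqrt{n}+5$.
   Context: An $n$-town is a set $S\subset\mathbb{Z}\times\mathbb{Z}$ of exactly $n$ distinct grid points; its cost is $c(S)=\frac12\sum_{s\in S}\sum_{t\in S}\|s-t\|_1$ (Manhattan distance), and it is optimal if its cost is minimum among all $n$-towns. For $i\in\mathbb{Z}$, the $i$-th column of $S$ is $C_i=\{(i,y)\in S\}$ and the $i$-th row is $R_i=\{(x,i)\in S\}$. The width of $S$ is $w(S)=\max_{i}|R_i|$ and the height is $h(S)=\max_{i}|C_i|$. *)

theory Defs
  imports Complex_Main
begin

type_synonym point = "int \<times> int"

definition manhattan :: "point \<Rightarrow> point \<Rightarrow> int" where
  "manhattan s t = \<bar>fst s - fst t\<bar> + \<bar>snd s - snd t\<bar>"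

definition is_town :: "nat \<Rightarrow> point set \<Rightarrow> bool" where
  "is_town n S \<longleftrightarrow> finite S \<and> card S = n"

definition town_cost :: "point set \<Rightarrow> real" where
  "town_cost S = (1/2) * real_of_int (\<Sum>s\<in>S. \<Sum>t\<in>S. manhattan s t)"

definition optimal_town :: "nat \<Rightarrow> point set \<Rightarrow> bool" where
  "optimal_town n S \<longleftrightarrow> is_town n S \<and> (\<forall>T. is_town n T \<longrightarrow> town_cost S \<le> town_cost T)"

definition col :: "point set \<Rightarrow> int \<Rightarrow> point set" where
  "col S i = {p \<in> S. fst p = i}"

definition row :: "point set \<Rightarrow> int \<Rightarrow> point set" where
  "row S i = {p \<in> S. snd p = i}"

definition width :: "point set \<Rightarrow> nat" where
  "width S = Max (range (\<lambda>i. card (row S i)))"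

definition height :: "point set \<Rightarrow> nat" where
  "height S = Max (range (\<lambda>i. card (col S i)))"

end

theory Submission
  imports Defs
begin



lemma manhattan_sym: "manhattan s t = manhattan t s"
  unfolding manhattan_def by (simp add: abs_minus_commute)

lemma manhattan_self[simp]: "manhattan s s = 0"
  unfolding manhattan_def by simp

definition gx :: "point set \<Rightarrow> int \<Rightarrow> int" where
  "gx S x = (\<Sum>t\<in>S. \<bar>x - fst t\<bar>)"
definition hy :: "point set \<Rightarrow> int \<Rightarrow> int" where
  "hy S y = (\<Sum>t\<in>S. \<bar>y - snd t\<bar>)"

lemma ff_split: "(\<Sum>t\<in>S. manhattan q t) = gx S (fst q) + hy S (snd q)"
  unfolding manhattan_def gx_def hy_def by (simp add: sum.distrib)

lemma double_sum_insert:
  assumes "finite A" "p \<notin> A"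
  shows "(\<Sum>s\<in>insert p A. \<Sum>t\<in>insert p A. manhattan s t)
       = 2 * (\<Sum>t\<in>A. manhattan p t) + (\<Sum>s\<in>A. \<Sum>t\<in>A. manhattan s t)"
proof -
  have "(\<Sum>s\<in>insert p A. \<Sum>t\<in>insert p A. manhattan s t)
      = (\<Sum>t\<in>insert p A. manhattan p t) + (\<Sum>s\<in>A. \<Sum>t\<in>insert p A. manhattan s t)"
    using assms by (simp add: sum.insert)
  also have "(\<Sum>t\<in>insert p A. manhattan p t) = (\<Sum>t\<in>A. manhattan p t)"
    using assms by (simp add: sum.insert)
  also have "(\<Sum>s\<in>A. \<Sum>t\<in>insert p A. manhattan s t) = (\<Sum>s\<in>A. manhattan s p + (\<Sum>t\<in>A. manhattan s t))"
    using assms by (intro sum.cong) (auto simp: sum.insert)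
  also have "\<dots> = (\<Sum>t\<in>A. manhattan p t) + (\<Sum>s\<in>A. \<Sum>t\<in>A. manhattan s t)"
    by (simp add: sum.distrib manhattan_sym)
  finally show ?thesis by simp
qed

lemma margin:
  assumes opt: "optimal_town n S" and p: "p \<in> S" and q: "q \<notin> S"
  shows "(\<Sum>t\<in>S. manhattan p t) + manhattan p q \<le> (\<Sum>t\<in>S. manhattan q t)"
proof -
  from opt have fin: "finite S" and cS: "card S = n"
    and mn: "\<And>T. is_town n T \<Longrightarrow> town_cost S \<le> town_cost T"
    unfolding optimal_town_def is_town_def by auto
  define A where "A = S - {p}"
  have finA: "finite A" using fin A_def by auto
  have pA: "p \<notin> A" and qA: "q \<notin> A" using q A_def by auto
  have SA: "S = insert p A" using p A_def by auto
  define T where "T = insert q A"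
  have "card A = n - 1" using cS p fin A_def by (simp add: card_Diff_singleton)
  moreover have "n \<ge> 1" using p fin cS card_0_eq by fastforce
  ultimately have "card T = n" using finA qA T_def by simp
  hence "is_town n T" using finA T_def is_town_def by auto
  hence "town_cost S \<le> town_cost T" by (rule mn)
  hence "(1/2) * real_of_int (\<Sum>s\<in>S. \<Sum>t\<in>S. manhattan s t) \<le> (1/2) * real_of_int (\<Sum>s\<in>T. \<Sum>t\<in>T. manhattan s t)"
    unfolding town_cost_def .
  hence "real_of_int (\<Sum>s\<in>S. \<Sum>t\<in>S. manhattan s t) \<le> real_of_int (\<Sum>s\<in>T. \<Sum>t\<in>T. manhattan s t)"
    by linarith
  hence le: "(\<Sum>s\<in>S. \<Sum>t\<in>S. manhattan s t) \<le> (\<Sum>s\<in>T. \<Sum>t\<in>T. manhattan s t)"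
    by (simp only: of_int_le_iff)
  have "(\<Sum>t\<in>A. manhattan p t) \<le> (\<Sum>t\<in>A. manhattan q t)"
    using le unfolding SA T_def double_sum_insert[OF finA pA] double_sum_insert[OF finA qA] by simp
  moreover have "(\<Sum>t\<in>S. manhattan p t) = (\<Sum>t\<in>A. manhattan p t)"
    unfolding SA using finA pA by (simp add: sum.insert)
  moreover have "(\<Sum>t\<in>S. manhattan q t) = manhattan q p + (\<Sum>t\<in>A. manhattan q t)"
    unfolding SA using finA pA by (simp add: sum.insert)
  ultimately show ?thesis by (simp add: manhattan_sym)
qed




lemma abs_convex_int:
  fixes u v w c :: int
  assumes "u \<le> v" "v \<le> w"
  shows "(w - u) * \<bar>v - c\<bar> \<le> (w - v) * \<bar>u - c\<bar> + (v - u) * \<bar>w - c\<bar>"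
proof (cases "c \<le> v")
  case True
  have "(w - u) * \<bar>v - c\<bar> = (w - u) * (v - c)" using True by simp
  also have "\<dots> = (w - v) * (u - c) + (v - u) * (w - c)" by (simp add: algebra_simps)
  also have "\<dots> \<le> (w - v) * \<bar>u - c\<bar> + (v - u) * \<bar>w - c\<bar>"
    using assms by (intro add_mono mult_left_mono) auto
  finally show ?thesis .
next
  case False
  have "(w - u) * \<bar>v - c\<bar> = (w - u) * (c - v)" using False by simp
  also have "\<dots> = (w - v) * (c - u) + (v - u) * (c - w)" by (simp add: algebra_simps)
  also have "\<dots> \<le> (w - v) * \<bar>u - c\<bar> + (v - u) * \<bar>w - c\<bar>"
    using assms by (intro add_mono mult_left_mono) auto
  finally show ?thesis .
qed

lemma gx_convex:
  assumes "u \<le> v" "v \<le> w"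
  shows "(w - u) * gx S v \<le> (w - v) * gx S u + (v - u) * gx S w"
proof -
  have "(w - u) * gx S v = (\<Sum>t\<in>S. (w - u) * \<bar>v - fst t\<bar>)" by (simp add: gx_def sum_distrib_left)
  also have "\<dots> \<le> (\<Sum>t\<in>S. (w - v) * \<bar>u - fst t\<bar> + (v - u) * \<bar>w - fst t\<bar>)"
    by (intro sum_mono abs_convex_int assms)
  also have "\<dots> = (w - v) * gx S u + (v - u) * gx S w" by (simp add: gx_def sum_distrib_left sum.distrib)
  finally show ?thesis .
qed

locale otown =
  fixes n :: nat and S :: "point set" and x0 y0 :: int
  assumes opt: "optimal_town n S" and npos: "1 \<le> n"
    and x0min: "\<And>x. gx S x0 \<le> gx S x" and y0min: "\<And>y. hy S y0 \<le> hy S y"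
begin

lemma fin: "finite S" and cardS: "card S = n"
  using opt unfolding optimal_town_def is_town_def by auto

lemma ne: "S \<noteq> {}" using cardS npos by auto

lemma marg:
  assumes "p \<in> S" "q \<notin> S"
  shows "gx S (fst p) + hy S (snd p) + \<bar>fst p - fst q\<bar> + \<bar>snd p - snd q\<bar> \<le> gx S (fst q) + hy S (snd q)"
  using margin[OF opt assms] unfolding ff_split by (simp add: manhattan_def)

lemma nest: assumes "(x, y) \<in> S" shows "(x, y0) \<in> S"
proof (rule ccontr)
  assume "(x, y0) \<notin> S"
  from marg[OF assms this] have "hy S y + \<bar>y - y0\<bar> \<le> hy S y0" by simp
  with y0min[of y] have "y = y0" by simp
  with assms \<open>(x, y0) \<notin> S\<close> show False by simp
qed

lemma gx_mono_right: assumes "x0 \<le> v" "v \<le> w" shows "gx S v \<le> gx S w"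
proof (cases "x0 = w")
  case True thus ?thesis using assms by simp
next
  case False
  hence pos: "w - x0 > 0" using assms by simp
  have "(w - x0) * gx S v \<le> (w - v) * gx S x0 + (v - x0) * gx S w" by (rule gx_convex) (use assms in auto)
  also have "\<dots> \<le> (w - v) * gx S w + (v - x0) * gx S w"
    using x0min[of w] assms by (intro add_right_mono mult_left_mono) auto
  also have "\<dots> = (w - x0) * gx S w" by (simp add: algebra_simps)
  finally show ?thesis using pos by simp
qed

lemma gx_mono_left: assumes "w \<le> v" "v \<le> x0" shows "gx S v \<le> gx S w"
proof (cases "x0 = w")
  case True thus ?thesis using assms by simp
next
  case False
  hence pos: "x0 - w > 0" using assms by simp
  have "(x0 - w) * gx S v \<le> (x0 - v) * gx S w + (v - w) * gx S x0" by (rule gx_convex) (use assms in auto)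
  also have "\<dots> \<le> (x0 - v) * gx S w + (v - w) * gx S w"
    using x0min[of w] assms by (intro add_left_mono mult_left_mono) auto
  also have "\<dots> = (x0 - w) * gx S w" by (simp add: algebra_simps)
  finally show ?thesis using pos by simp
qed

lemma row_int:
  assumes "(x, y) \<in> S" and "x0 \<le> x' \<and> x' \<le> x \<or> x \<le> x' \<and> x' \<le> x0"
  shows "(x', y) \<in> S"
proof (rule ccontr)
  assume "(x', y) \<notin> S"
  from marg[OF assms(1) this] have "gx S x + \<bar>x - x'\<bar> \<le> gx S x'" by simp
  moreover have "gx S x' \<le> gx S x" using assms(2) gx_mono_right gx_mono_left by blast
  ultimately have "x = x'" by simp
  with assms(1) \<open>(x', y) \<notin> S\<close> show False by simp
qed

definition X0 :: "int set" where "X0 = {x. (x, y0) \<in> S}"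
definition a :: int where "a = Min X0"
definition b :: int where "b = Max X0"

lemma X0_fin: "finite X0"
proof -
  have "X0 \<subseteq> fst ` S" unfolding X0_def by force
  thus ?thesis using fin finite_subset by blast
qed

lemma X0_ne: "X0 \<noteq> {}"
proof -
  obtain p where "p \<in> S" using ne by blast
  hence "(fst p, y0) \<in> S" using nest[of "fst p" "snd p"] by simp
  thus ?thesis unfolding X0_def by blast
qed

lemma aS: "(a, y0) \<in> S" and bS: "(b, y0) \<in> S"
  using Min_in[OF X0_fin X0_ne] Max_in[OF X0_fin X0_ne] unfolding a_def b_def X0_def by auto

lemma S_in_ab: assumes "(x, y) \<in> S" shows "a \<le> x" "x \<le> b"
proof -
  have "x \<in> X0" using nest[OF assms] unfolding X0_def by simp
  thus "a \<le> x" "x \<le> b" unfolding a_def b_def using X0_fin by auto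
qed

lemma ab: "a \<le> b" using S_in_ab[OF aS] by simp

lemma x0_ab: "a \<le> x0" "x0 \<le> b"
proof -
  show "a \<le> x0"
  proof (rule ccontr)
    assume "\<not> a \<le> x0"
    hence "(x0, y0) \<in> S" using row_int[OF aS, of x0] by auto
    thus False using S_in_ab \<open>\<not> a \<le> x0\<close> by blast
  qed
  show "x0 \<le> b"
  proof (rule ccontr)
    assume "\<not> x0 \<le> b"
    hence "(x0, y0) \<in> S" using row_int[OF bS, of x0] by auto
    thus False using S_in_ab \<open>\<not> x0 \<le> b\<close> by blast
  qed
qed

lemma row0_full: assumes "a \<le> x" "x \<le> b" shows "(x, y0) \<in> S"
proof (cases "x \<le> x0")
  case True thus ?thesis using row_int[OF aS, of x] assms by auto
next
  case False thus ?thesis using row_int[OF bS, of x] assms by auto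
qed

end



lemma pair_term:
  fixes c y k :: int assumes "k \<ge> 0"
  shows "\<bar>c + k - y\<bar> + \<bar>c - k - y\<bar> - 2 * \<bar>c - y\<bar> = 2 * max 0 (k - \<bar>y - c\<bar>)"
  using assms by (auto simp: abs_if max_def)

lemma step_term:
  fixes d :: int and k :: nat assumes "d \<ge> 0"
  shows "max 0 (int (Suc k) - d) = max 0 (int k - d) + of_bool (d \<le> int k)"
  using assms by (auto simp: max_def)


context otown begin

lemma S_sub: "S \<subseteq> {a..b} \<times> UNIV" using S_in_ab by auto

lemma n_ge_W: "b - a + 1 \<le> int n"
proof -
  have "{a..b} \<times> {y0} \<subseteq> S" using row0_full by auto
  hence "card ({a..b} \<times> {y0}) \<le> card S" using fin by (intro card_mono) auto
  hence "card {a..b} \<le> n" using cardS by (simp add: card_cartesian_product)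
  thus ?thesis using ab by simp
qed

lemma row_card: "card (row S i) \<le> nat (b - a + 1)"
proof -
  have "row S i \<subseteq> {a..b} \<times> {i}" unfolding row_def using S_in_ab by force
  hence "card (row S i) \<le> card ({a..b} \<times> {i})" by (intro card_mono) auto
  thus ?thesis by (simp add: card_cartesian_product)
qed

lemma width_le: "int (width S) \<le> b - a + 1"
proof -
  have "row S i \<subseteq> S" for i unfolding row_def by auto
  hence "card (row S i) \<le> n" for i using cardS fin card_mono by metis
  hence "range (\<lambda>i. card (row S i)) \<subseteq> {..n}" by auto
  hence fr: "finite (range (\<lambda>i. card (row S i)))" using finite_subset by blast
  have "width S \<le> nat (b - a + 1)" unfolding width_def
    using fr row_card by (subst Max_le_iff) auto
  thus ?thesis using ab by simp
qed

lemma gx_a_b: "gx S a + gx S b = int n * (b - a)"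
proof -
  have "gx S a + gx S b = (\<Sum>t\<in>S. \<bar>a - fst t\<bar> + \<bar>b - fst t\<bar>)" by (simp add: gx_def sum.distrib)
  also have "\<dots> = (\<Sum>t\<in>S. b - a)"
    by (intro sum.cong refl) (use S_in_ab in force)
  finally show ?thesis using cardS by simp
qed

lemma gx_am1: "gx S (a - 1) = gx S a + int n"
proof -
  have "gx S (a - 1) = (\<Sum>t\<in>S. \<bar>a - fst t\<bar> + 1)"
    unfolding gx_def by (intro sum.cong refl) (use S_in_ab in force)
  thus ?thesis using cardS by (simp add: sum.distrib gx_def)
qed

lemma gx_bp1: "gx S (b + 1) = gx S b + int n"
proof -
  have "gx S (b + 1) = (\<Sum>t\<in>S. \<bar>b - fst t\<bar> + 1)"
    unfolding gx_def by (intro sum.cong refl) (use S_in_ab in force)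
  thus ?thesis using cardS by (simp add: sum.distrib gx_def)
qed

definition Dl :: "int \<Rightarrow> int" where "Dl x = int n * (b - a) - 2 * gx S x"

lemma Dl_a: "Dl a \<ge> (b - a + 1) - int n"
proof -
  have "(b + 1, y0) \<notin> S" using S_in_ab by force
  from marg[OF aS this] have "gx S a + (b + 1 - a) \<le> gx S (b + 1)" using ab by simp
  thus ?thesis using gx_bp1 gx_a_b unfolding Dl_def by simp
qed

lemma Dl_b: "Dl b \<ge> (b - a + 1) - int n"
proof -
  have "(a - 1, y0) \<notin> S" using S_in_ab by force
  from marg[OF bS this] have "gx S b + (b - (a - 1)) \<le> gx S (a - 1)" using ab by simp
  thus ?thesis using gx_am1 gx_a_b unfolding Dl_def by simp
qed

lemma mem:
  assumes "a \<le> x" "x \<le> b" and lt: "2 * (hy S y - hy S y0) - 2 * \<bar>y - y0\<bar> < Dl x + (b - a)"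
  shows "(x, y) \<in> S"
proof (rule ccontr)
  assume nS: "(x, y) \<notin> S"
  from marg[OF aS nS] have 1: "gx S a + hy S y0 + (x - a) + \<bar>y0 - y\<bar> \<le> gx S x + hy S y" using assms by simp
  from marg[OF bS nS] have 2: "gx S b + hy S y0 + (b - x) + \<bar>y0 - y\<bar> \<le> gx S x + hy S y" using assms by simp
  have "\<bar>y0 - y\<bar> = \<bar>y - y0\<bar>" by (simp add: abs_minus_commute)
  with 1 2 have 3: "gx S a + gx S b + 2 * hy S y0 + (b - a) + 2 * \<bar>y - y0\<bar> \<le> 2 * gx S x + 2 * hy S y" by arith
  define N where "N = int n * (b - a)"
  have 4: "gx S a + gx S b = N" using gx_a_b N_def by simp
  have 5: "2 * (hy S y - hy S y0) - 2 * \<bar>y - y0\<bar> < N - 2 * gx S x + (b - a)" using lt N_def Dl_def by simp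
  show False using 3 4 5 by arith
qed

lemma band_card: "card {t\<in>S. \<bar>snd t - y0\<bar> \<le> int k} \<le> (2 * k + 1) * nat (b - a + 1)"
proof -
  have "{t\<in>S. \<bar>snd t - y0\<bar> \<le> int k} \<subseteq> {a..b} \<times> {y0 - int k..y0 + int k}"
    using S_in_ab by force
  hence "card {t\<in>S. \<bar>snd t - y0\<bar> \<le> int k} \<le> card ({a..b} \<times> {y0 - int k..y0 + int k})"
    by (intro card_mono) auto
  also have "\<dots> = nat (b - a + 1) * (2 * k + 1)" by (simp add: card_cartesian_product nat_add_distrib nat_mult_distrib)
  finally show ?thesis by (simp add: mult.commute)
qed

lemma Phi_bound: "(\<Sum>t\<in>S. max 0 (int k - \<bar>snd t - y0\<bar>)) \<le> (b - a + 1) * int k ^ 2"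
proof (induction k)
  case 0
  have "(\<Sum>t\<in>S. max 0 (0 - \<bar>snd t - y0\<bar>)) = (\<Sum>t\<in>S. (0::int))" by (intro sum.cong) auto
  thus ?case by simp
next
  case (Suc k)
  have "(\<Sum>t\<in>S. max 0 (int (Suc k) - \<bar>snd t - y0\<bar>))
      = (\<Sum>t\<in>S. max 0 (int k - \<bar>snd t - y0\<bar>) + of_bool (\<bar>snd t - y0\<bar> \<le> int k))"
    by (intro sum.cong refl step_term) auto
  also have "\<dots> = (\<Sum>t\<in>S. max 0 (int k - \<bar>snd t - y0\<bar>)) + int (card {t\<in>S. \<bar>snd t - y0\<bar> \<le> int k})"
    using fin by (simp add: sum.distrib Int_def)
  also have "\<dots> \<le> (b - a + 1) * int k ^ 2 + int ((2 * k + 1) * nat (b - a + 1))"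
    using Suc band_card[of k] by (intro add_mono) (simp_all only: of_nat_le_iff)
  also have "\<dots> = (b - a + 1) * int (Suc k) ^ 2" using ab by (simp add: algebra_simps power2_eq_square)
  finally show ?case .
qed

lemma pair_bound:
  "hy S (y0 + int k) + hy S (y0 - int k) - 2 * hy S y0 \<le> 2 * (b - a + 1) * int k ^ 2"
proof -
  have "hy S (y0 + int k) + hy S (y0 - int k) - 2 * hy S y0
     = (\<Sum>t\<in>S. \<bar>y0 + int k - snd t\<bar> + \<bar>y0 - int k - snd t\<bar> - 2 * \<bar>y0 - snd t\<bar>)"
    by (simp add: hy_def sum.distrib sum_subtractf sum_distrib_left)
  also have "\<dots> = (\<Sum>t\<in>S. 2 * max 0 (int k - \<bar>snd t - y0\<bar>))"
    by (intro sum.cong refl pair_term) auto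
  also have "\<dots> = 2 * (\<Sum>t\<in>S. max 0 (int k - \<bar>snd t - y0\<bar>))" by (simp add: sum_distrib_left)
  also have "\<dots> \<le> 2 * ((b - a + 1) * int k ^ 2)" using Phi_bound by simp
  finally show ?thesis by (simp only: mult.assoc)
qed

end



lemma card_filter_sum: "finite A \<Longrightarrow> int (card {s\<in>A. P s}) = (\<Sum>s\<in>A. of_bool (P s))"
  by (simp add: Int_def conj_commute)

lemma double_count:
  assumes "finite A"
  shows "(\<Sum>t\<in>A. int (card {s\<in>A. R s t})) = (\<Sum>s\<in>A. int (card {t\<in>A. R s t}))"
proof -
  have "(\<Sum>t\<in>A. int (card {s\<in>A. R s t})) = (\<Sum>t\<in>A. \<Sum>s\<in>A. (of_bool (R s t) :: int))"
    using assms by (simp add: card_filter_sum)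
  also have "\<dots> = (\<Sum>s\<in>A. \<Sum>t\<in>A. (of_bool (R s t) :: int))" by (rule sum.swap)
  also have "\<dots> = (\<Sum>s\<in>A. int (card {t\<in>A. R s t}))"
    using assms by (simp add: card_filter_sum)
  finally show ?thesis .
qed

context otown begin

definition Sp :: "point set" where "Sp = {t\<in>S. fst t > x0}"
definition Sm :: "point set" where "Sm = {t\<in>S. fst t < x0}"

lemma Sp_fin: "finite Sp" and Sm_fin: "finite Sm" using fin unfolding Sp_def Sm_def by auto

lemma gx_x0_split: "gx S x0 = (\<Sum>t\<in>Sm. x0 - fst t) + (\<Sum>t\<in>Sp. fst t - x0)"
proof -
  have "gx S x0 = (\<Sum>t\<in>S. (if fst t < x0 then x0 - fst t else 0) + (if fst t > x0 then fst t - x0 else 0))"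
    unfolding gx_def by (intro sum.cong refl) auto
  also have "\<dots> = (\<Sum>t\<in>Sm. x0 - fst t) + (\<Sum>t\<in>Sp. fst t - x0)"
    unfolding Sm_def Sp_def using fin by (simp add: sum.distrib sum.inter_filter)
  finally show ?thesis .
qed

lemma Nm_half: "2 * int (card Sm) \<le> int n"
proof -
  have "gx S (x0 - 1) = (\<Sum>t\<in>S. \<bar>x0 - fst t\<bar> + (1 - 2 * of_bool (fst t < x0)))"
    unfolding gx_def by (intro sum.cong refl) auto
  also have "\<dots> = gx S x0 + int n - 2 * int (card Sm)"
    unfolding gx_def Sm_def using fin cardS
    by (simp add: sum.distrib sum_subtractf sum_distrib_left card_filter_sum)
  finally show ?thesis using x0min[of "x0 - 1"] by simp
qed

lemma Np_half: "2 * int (card Sp) \<le> int n"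
proof -
  have "gx S (x0 + 1) = (\<Sum>t\<in>S. \<bar>x0 - fst t\<bar> + (1 - 2 * of_bool (fst t > x0)))"
    unfolding gx_def by (intro sum.cong refl) auto
  also have "\<dots> = gx S x0 + int n - 2 * int (card Sp)"
    unfolding gx_def Sp_def using fin cardS
    by (simp add: sum.distrib sum_subtractf sum_distrib_left card_filter_sum)
  finally show ?thesis using x0min[of "x0 + 1"] by simp
qed

lemma Sp_sum: "2 * (\<Sum>t\<in>Sp. fst t - x0) \<le> (b + 1 - x0) * int (card Sp)"
proof -
  let ?R = "\<lambda>s t. snd s = snd t \<and> fst s \<le> fst t"
  have 1: "fst t - x0 = int (card {s\<in>Sp. ?R s t})" if t: "t \<in> Sp" for t
  proof -
    have "{s\<in>Sp. ?R s t} = (\<lambda>x. (x, snd t)) ` {x0+1..fst t}"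
    proof
      show "{s\<in>Sp. ?R s t} \<subseteq> (\<lambda>x. (x, snd t)) ` {x0+1..fst t}"
      proof
        fix s assume s: "s \<in> {s\<in>Sp. ?R s t}"
        show "s \<in> (\<lambda>x. (x, snd t)) ` {x0+1..fst t}"
          by (rule image_eqI[of _ _ "fst s"]) (use s in \<open>auto simp: Sp_def prod_eq_iff\<close>)
      qed
      show "(\<lambda>x. (x, snd t)) ` {x0+1..fst t} \<subseteq> {s\<in>Sp. ?R s t}"
      proof
        fix s assume "s \<in> (\<lambda>x. (x, snd t)) ` {x0+1..fst t}"
        then obtain x where x: "x \<in> {x0+1..fst t}" "s = (x, snd t)" by auto
        have "(fst t, snd t) \<in> S" using t unfolding Sp_def by simp
        hence "(x, snd t) \<in> S" using row_int[of "fst t" "snd t" x] x by auto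
        thus "s \<in> {s\<in>Sp. ?R s t}" using x unfolding Sp_def by auto
      qed
    qed
    moreover have "inj (\<lambda>x::int. (x, snd t))" by (auto simp: inj_def)
    ultimately have "card {s\<in>Sp. ?R s t} = card {x0+1..fst t}"
      by (simp add: card_image inj_on_def)
    thus ?thesis using t unfolding Sp_def by simp
  qed
  have 2: "int (card {t\<in>Sp. ?R s t}) \<le> b - fst s + 1" if s: "s \<in> Sp" for s
  proof -
    have "{t\<in>Sp. ?R s t} \<subseteq> (\<lambda>x. (x, snd s)) ` {fst s..b}"
      unfolding Sp_def using S_in_ab by (force intro!: image_eqI[where x="fst _"])
    hence "card {t\<in>Sp. ?R s t} \<le> card ((\<lambda>x. (x, snd s)) ` {fst s..b})" by (intro card_mono) auto
    also have "\<dots> \<le> card {fst s..b}" by (rule card_image_le) auto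
    finally have "card {t\<in>Sp. ?R s t} \<le> nat (b - fst s + 1)" by simp
    hence "int (card {t\<in>Sp. ?R s t}) \<le> int (nat (b - fst s + 1))" by (simp only: of_nat_le_iff)
    moreover have "fst s \<le> b" using s S_in_ab[of "fst s" "snd s"] unfolding Sp_def by simp
    ultimately show ?thesis by simp
  qed
  have "(\<Sum>t\<in>Sp. fst t - x0) = (\<Sum>t\<in>Sp. int (card {s\<in>Sp. ?R s t}))" using 1 by (intro sum.cong) auto
  also have "\<dots> = (\<Sum>s\<in>Sp. int (card {t\<in>Sp. ?R s t}))" by (rule double_count[OF Sp_fin])
  also have "\<dots> \<le> (\<Sum>s\<in>Sp. b - fst s + 1)" using 2 by (intro sum_mono) auto
  finally have "(\<Sum>t\<in>Sp. fst t - x0) \<le> (\<Sum>s\<in>Sp. b - fst s + 1)" .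
  hence "2 * (\<Sum>t\<in>Sp. fst t - x0) \<le> (\<Sum>t\<in>Sp. fst t - x0) + (\<Sum>s\<in>Sp. b - fst s + 1)" by simp
  also have "\<dots> = (\<Sum>t\<in>Sp. b + 1 - x0)" by (simp add: sum.distrib[symmetric])
  finally show ?thesis by (simp add: mult.commute)
qed

lemma Sm_sum: "2 * (\<Sum>t\<in>Sm. x0 - fst t) \<le> (x0 - a + 1) * int (card Sm)"
proof -
  let ?R = "\<lambda>s t. snd s = snd t \<and> fst t \<le> fst s"
  have 1: "x0 - fst t = int (card {s\<in>Sm. ?R s t})" if t: "t \<in> Sm" for t
  proof -
    have "{s\<in>Sm. ?R s t} = (\<lambda>x. (x, snd t)) ` {fst t..x0 - 1}"
    proof
      show "{s\<in>Sm. ?R s t} \<subseteq> (\<lambda>x. (x, snd t)) ` {fst t..x0 - 1}"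
      proof
        fix s assume s: "s \<in> {s\<in>Sm. ?R s t}"
        show "s \<in> (\<lambda>x. (x, snd t)) ` {fst t..x0 - 1}"
          by (rule image_eqI[of _ _ "fst s"]) (use s in \<open>auto simp: Sm_def prod_eq_iff\<close>)
      qed
      show "(\<lambda>x. (x, snd t)) ` {fst t..x0 - 1} \<subseteq> {s\<in>Sm. ?R s t}"
      proof
        fix s assume "s \<in> (\<lambda>x. (x, snd t)) ` {fst t..x0 - 1}"
        then obtain x where x: "x \<in> {fst t..x0 - 1}" "s = (x, snd t)" by auto
        have "(fst t, snd t) \<in> S" using t unfolding Sm_def by simp
        hence "(x, snd t) \<in> S" using row_int[of "fst t" "snd t" x] x by auto
        thus "s \<in> {s\<in>Sm. ?R s t}" using x unfolding Sm_def by auto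
      qed
    qed
    moreover have "inj (\<lambda>x::int. (x, snd t))" by (auto simp: inj_def)
    ultimately have "card {s\<in>Sm. ?R s t} = card {fst t..x0 - 1}"
      by (simp add: card_image inj_on_def)
    thus ?thesis using t unfolding Sm_def by simp
  qed
  have 2: "int (card {t\<in>Sm. ?R s t}) \<le> fst s - a + 1" if s: "s \<in> Sm" for s
  proof -
    have "{t\<in>Sm. ?R s t} \<subseteq> (\<lambda>x. (x, snd s)) ` {a..fst s}"
      unfolding Sm_def using S_in_ab by (force intro!: image_eqI[where x="fst _"])
    hence "card {t\<in>Sm. ?R s t} \<le> card ((\<lambda>x. (x, snd s)) ` {a..fst s})" by (intro card_mono) auto
    also have "\<dots> \<le> card {a..fst s}" by (rule card_image_le) auto
    finally have "card {t\<in>Sm. ?R s t} \<le> nat (fst s - a + 1)" by simp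
    hence "int (card {t\<in>Sm. ?R s t}) \<le> int (nat (fst s - a + 1))" by (simp only: of_nat_le_iff)
    moreover have "a \<le> fst s" using s S_in_ab[of "fst s" "snd s"] unfolding Sm_def by simp
    ultimately show ?thesis by simp
  qed
  have "(\<Sum>t\<in>Sm. x0 - fst t) = (\<Sum>t\<in>Sm. int (card {s\<in>Sm. ?R s t}))" using 1 by (intro sum.cong) auto
  also have "\<dots> = (\<Sum>s\<in>Sm. int (card {t\<in>Sm. ?R s t}))" by (rule double_count[OF Sm_fin])
  also have "\<dots> \<le> (\<Sum>s\<in>Sm. fst s - a + 1)" using 2 by (intro sum_mono) auto
  finally have "(\<Sum>t\<in>Sm. x0 - fst t) \<le> (\<Sum>s\<in>Sm. fst s - a + 1)" .
  hence "2 * (\<Sum>t\<in>Sm. x0 - fst t) \<le> (\<Sum>t\<in>Sm. x0 - fst t) + (\<Sum>s\<in>Sm. fst s - a + 1)" by simp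
  also have "\<dots> = (\<Sum>t\<in>Sm. x0 - a + 1)" by (simp add: sum.distrib[symmetric])
  finally show ?thesis by (simp add: mult.commute)
qed

lemma P0_bound: "2 * Dl x0 \<ge> int n * (b - a - 2)"
proof -
  have A: "x0 - a + 1 \<ge> 0" "b + 1 - x0 \<ge> 0" using x0_ab by auto
  have "4 * gx S x0 = 2 * (2 * (\<Sum>t\<in>Sm. x0 - fst t)) + 2 * (2 * (\<Sum>t\<in>Sp. fst t - x0))"
    using gx_x0_split by simp
  also have "\<dots> \<le> (x0 - a + 1) * (2 * int (card Sm)) + (b + 1 - x0) * (2 * int (card Sp))"
    using Sm_sum Sp_sum by simp
  also have "\<dots> \<le> (x0 - a + 1) * int n + (b + 1 - x0) * int n"
    using A Nm_half Np_half by (intro add_mono mult_left_mono) auto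
  also have "\<dots> = int n * (b - a + 2)" by (simp add: algebra_simps)
  finally have "4 * gx S x0 \<le> int n * (b - a + 2)" .
  thus ?thesis unfolding Dl_def by (simp add: algebra_simps)
qed

end



lemma count_lemma:
  fixes D :: "int \<Rightarrow> int" and a x0 b :: int and P E \<theta> :: real
  assumes ax: "a \<le> x0" and xb: "x0 \<le> b"
    and L: "\<And>x. a \<le> x \<Longrightarrow> x \<le> x0 \<Longrightarrow> of_int (x0 - a) * of_int (D x) \<ge> of_int (x - a) * P - of_int (x0 - x) * E"
    and R: "\<And>x. x0 \<le> x \<Longrightarrow> x \<le> b \<Longrightarrow> of_int (b - x0) * of_int (D x) \<ge> of_int (b - x) * P - of_int (x - x0) * E"
    and Px0: "of_int (D x0) \<ge> P" and PE: "P + E > 0" and th: "\<theta> + E \<ge> 0"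
  shows "real (card {x\<in>{a..b}. of_int (D x) \<ge> \<theta>}) \<ge> of_int (b - a) * (P - \<theta>) / (P + E) - 1"
proof (cases "\<theta> \<le> P")
  case False
  have "of_int (b - a) * (P - \<theta>) \<le> 0" using False ax xb by (intro mult_nonneg_nonpos) auto
  hence "of_int (b - a) * (P - \<theta>) / (P + E) \<le> 0" using PE by (simp add: divide_nonpos_pos)
  thus ?thesis by simp
next
  case True
  define zA where "zA = of_int (x0 - a) * (\<theta> + E) / (P + E)"
  define zB where "zB = of_int (b - x0) * (\<theta> + E) / (P + E)"
  define cA where "cA = \<lceil>zA\<rceil>"
  define cB where "cB = \<lceil>zB\<rceil>"
  have zA0: "zA \<ge> 0" unfolding zA_def using ax th PE by simp
  have zB0: "zB \<ge> 0" unfolding zB_def using xb th PE by simp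
  have zAle: "zA \<le> of_int (x0 - a)"
  proof -
    have "of_int (x0 - a) * (\<theta> + E) \<le> of_int (x0 - a) * (P + E)" using True ax by (intro mult_left_mono) auto
    thus ?thesis unfolding zA_def using PE by (simp add: pos_divide_le_eq)
  qed
  have zBle: "zB \<le> of_int (b - x0)"
  proof -
    have "of_int (b - x0) * (\<theta> + E) \<le> of_int (b - x0) * (P + E)" using True xb by (intro mult_left_mono) auto
    thus ?thesis unfolding zB_def using PE by (simp add: pos_divide_le_eq)
  qed
  have cA0: "cA \<ge> 0" unfolding cA_def using zA0 by simp
  have cB0: "cB \<ge> 0" unfolding cB_def using zB0 by simp
  have cAle: "cA \<le> x0 - a" unfolding cA_def using zAle by (simp add: ceiling_le_iff)
  have cBle: "cB \<le> b - x0" unfolding cB_def using zBle by (simp add: ceiling_le_iff)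
  have cAz: "of_int cA \<le> zA + 1" unfolding cA_def by (rule of_int_ceiling_le_add_one)
  have cBz: "of_int cB \<le> zB + 1" unfolding cB_def by (rule of_int_ceiling_le_add_one)
  have zAc: "zA \<le> of_int cA" unfolding cA_def by (rule le_of_int_ceiling)
  have zBc: "zB \<le> of_int cB" unfolding cB_def by (rule le_of_int_ceiling)
  have sub: "{a + cA..b - cB} \<subseteq> {x\<in>{a..b}. of_int (D x) \<ge> \<theta>}"
  proof
    fix x assume x: "x \<in> {a + cA..b - cB}"
    hence xa: "a \<le> x" "x \<le> b" using cA0 cB0 by auto
    have "\<theta> \<le> of_int (D x)"
    proof (cases "x = x0")
      case True thus ?thesis using Px0 \<open>\<theta> \<le> P\<close> by simp
    next
      case neq: False
      show ?thesis
      proof (cases "x < x0")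
        case True
        have pos: "of_int (x0 - a) > (0::real)" using True xa by simp
        have "zA \<le> of_int (x - a)" using zAc x by simp
        hence "zA * (P + E) \<le> of_int (x - a) * (P + E)" using PE by (intro mult_right_mono) auto
        hence 1: "of_int (x0 - a) * (\<theta> + E) \<le> of_int (x - a) * (P + E)" unfolding zA_def using PE by simp
        have 2: "of_int (x0 - a) * of_int (D x) \<ge> of_int (x - a) * P - of_int (x0 - x) * E"
          using L[of x] xa True by simp
        have 3: "of_int (x - a) * P - of_int (x0 - x) * E = of_int (x - a) * (P + E) - of_int (x0 - a) * E"
          by (simp add: algebra_simps)
        have "of_int (x0 - a) * \<theta> \<le> of_int (x0 - a) * of_int (D x)"
          using 1 2 3 by (simp add: algebra_simps)
        thus ?thesis using pos by simp
      next
        case False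
        hence gt: "x > x0" using neq by simp
        have pos: "of_int (b - x0) > (0::real)" using gt xa by simp
        have "zB \<le> of_int (b - x)" using zBc x by simp
        hence "zB * (P + E) \<le> of_int (b - x) * (P + E)" using PE by (intro mult_right_mono) auto
        hence 1: "of_int (b - x0) * (\<theta> + E) \<le> of_int (b - x) * (P + E)" unfolding zB_def using PE by simp
        have 2: "of_int (b - x0) * of_int (D x) \<ge> of_int (b - x) * P - of_int (x - x0) * E"
          using R[of x] xa gt by simp
        have 3: "of_int (b - x) * P - of_int (x - x0) * E = of_int (b - x) * (P + E) - of_int (b - x0) * E"
          by (simp add: algebra_simps)
        have "of_int (b - x0) * \<theta> \<le> of_int (b - x0) * of_int (D x)"
          using 1 2 3 by (simp add: algebra_simps)
        thus ?thesis using pos by simp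
      qed
    qed
    thus "x \<in> {x\<in>{a..b}. of_int (D x) \<ge> \<theta>}" using xa by simp
  qed
  have "card {a + cA..b - cB} \<le> card {x\<in>{a..b}. of_int (D x) \<ge> \<theta>}"
    by (rule card_mono[OF _ sub]) (rule finite_subset[of _ "{a..b}"], auto)
  hence "real (card {a + cA..b - cB}) \<le> real (card {x\<in>{a..b}. of_int (D x) \<ge> \<theta>})" by simp
  moreover have "real (card {a + cA..b - cB}) = of_int (b - cB - (a + cA) + 1)"
    using cAle cBle by simp
  moreover have "zA + zB = of_int (b - a) * (\<theta> + E) / (P + E)"
    unfolding zA_def zB_def by (simp add: add_divide_distrib[symmetric] algebra_simps)
  moreover have "of_int (b - a) * (P - \<theta>) / (P + E) = of_int (b - a) - of_int (b - a) * (\<theta> + E) / (P + E)"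
    using PE by (simp add: field_simps)
  ultimately show ?thesis using cAz cBz by simp
qed

context otown begin

lemma left_chord:
  assumes "a \<le> x" "x \<le> x0"
  shows "(x0 - a) * Dl x \<ge> (x - a) * Dl x0 + (x0 - x) * Dl a"
proof -
  have c: "(x0 - a) * gx S x \<le> (x0 - x) * gx S a + (x - a) * gx S x0"
    by (rule gx_convex) (use assms in auto)
  have "(x0 - a) * Dl x - ((x - a) * Dl x0 + (x0 - x) * Dl a)
      = 2 * ((x0 - x) * gx S a + (x - a) * gx S x0 - (x0 - a) * gx S x)"
    unfolding Dl_def by (simp add: algebra_simps)
  moreover have "0 \<le> 2 * ((x0 - x) * gx S a + (x - a) * gx S x0 - (x0 - a) * gx S x)" using c by simp
  ultimately show ?thesis by (metis diff_ge_0_iff_ge)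
qed

lemma right_chord:
  assumes "x0 \<le> x" "x \<le> b"
  shows "(b - x0) * Dl x \<ge> (b - x) * Dl x0 + (x - x0) * Dl b"
proof -
  have c: "(b - x0) * gx S x \<le> (b - x) * gx S x0 + (x - x0) * gx S b"
    by (rule gx_convex) (use assms in auto)
  have "(b - x0) * Dl x - ((b - x) * Dl x0 + (x - x0) * Dl b)
      = 2 * ((b - x) * gx S x0 + (x - x0) * gx S b - (b - x0) * gx S x)"
    unfolding Dl_def by (simp add: algebra_simps)
  moreover have "0 \<le> 2 * ((b - x) * gx S x0 + (x - x0) * gx S b - (b - x0) * gx S x)" using c by simp
  ultimately show ?thesis by (metis diff_ge_0_iff_ge)
qed

definition P0 :: real where "P0 = real n * (of_int (b - a) - 2) / 2"
definition E0 :: real where "E0 = real n - of_int (b - a + 1)"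

lemma level_count:
  assumes PE: "P0 + E0 > 0" and th: "\<theta> \<ge> 0"
  shows "real (card {x\<in>{a..b}. of_int (Dl x) \<ge> \<theta>}) \<ge> of_int (b - a) * (P0 - \<theta>) / (P0 + E0) - 1"
proof (rule count_lemma[OF x0_ab(1) x0_ab(2) _ _ _ PE])
  have "real_of_int (int n * (b - a - 2)) \<le> real_of_int (2 * Dl x0)"
    using P0_bound by (simp only: of_int_le_iff)
  hence Dx0: "of_int (Dl x0) \<ge> P0" unfolding P0_def by simp
  thus "of_int (Dl x0) \<ge> P0" .
  have Da: "of_int (Dl a) \<ge> - E0" and Db: "of_int (Dl b) \<ge> - E0"
    using Dl_a Dl_b unfolding E0_def by simp_all
  show "of_int (x0 - a) * of_int (Dl x) \<ge> of_int (x - a) * P0 - of_int (x0 - x) * E0"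
    if "a \<le> x" "x \<le> x0" for x
  proof -
    have "real_of_int ((x - a) * Dl x0 + (x0 - x) * Dl a) \<le> real_of_int ((x0 - a) * Dl x)"
      using left_chord[OF that] by linarith
    moreover have "of_int (x - a) * P0 \<le> of_int (x - a) * of_int (Dl x0)"
      using that Dx0 by (intro mult_left_mono) auto
    moreover have "of_int (x0 - x) * (- E0) \<le> of_int (x0 - x) * of_int (Dl a)"
      using that Da by (intro mult_left_mono) auto
    ultimately show ?thesis by simp
  qed
  show "of_int (b - x0) * of_int (Dl x) \<ge> of_int (b - x) * P0 - of_int (x - x0) * E0"
    if "x0 \<le> x" "x \<le> b" for x
  proof -
    have "real_of_int ((b - x) * Dl x0 + (x - x0) * Dl b) \<le> real_of_int ((b - x0) * Dl x)"
      using right_chord[OF that] by linarith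
    moreover have "of_int (b - x) * P0 \<le> of_int (b - x) * of_int (Dl x0)"
      using that Dx0 by (intro mult_left_mono) auto
    moreover have "of_int (x - x0) * (- E0) \<le> of_int (x - x0) * of_int (Dl b)"
      using that Db by (intro mult_left_mono) auto
    ultimately show ?thesis by simp
  qed
  show "\<theta> + E0 \<ge> 0" using th n_ge_W unfolding E0_def by simp
qed

end


lemma poly_pos:
  fixes s m W :: real
  assumes hs: "17/5 \<le> s" and hW: "2*s+5 \<le> W" and hm1: "s - 2 \<le> m" and hm2: "m \<le> s"
  shows "(W-1)*(m*s^2*(W-3) - W*m*(m^2-1)/3 - 2*m) - (s^2+m)*(s^2*(W-1) - 2*W) > 0"
    (is "?F > 0")
proof -
  define \<sigma> where "\<sigma> = s - 17/5"
  define \<mu> where "\<mu> = m - s + 2"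
  define \<delta> where "\<delta> = W - 2*s - 5"
  have s: "s = 17/5 + \<sigma>" and m: "m = 17/5 + \<sigma> - 2 + \<mu>" and W: "W = 2*(17/5 + \<sigma>) + 5 + \<delta>"
    unfolding \<sigma>_def \<mu>_def \<delta>_def by simp_all
  have \<sigma>0: "\<sigma> \<ge> 0" and \<mu>0: "\<mu> \<ge> 0" and \<mu>2: "\<mu> \<le> 2" and \<delta>0: "\<delta> \<ge> 0"
    using assms unfolding \<sigma>_def \<mu>_def \<delta>_def by simp_all
  have \<mu>sq: "\<mu>^2 \<le> 2*\<mu>" using \<mu>0 \<mu>2 by (simp add: power2_eq_square mult_right_mono)
  have "\<mu>^2 * \<mu> \<le> \<mu>^2 * 2" by (rule mult_left_mono) (use \<mu>2 in auto)
  moreover have "\<mu>^3 = \<mu>^2 * \<mu>" by (simp add: power3_eq_cube power2_eq_square)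
  ultimately have "\<mu>^3 \<le> 2 * \<mu>^2" by simp
  hence \<mu>cu: "\<mu>^3 \<le> 4*\<mu>" using \<mu>sq by linarith
  have eq: "?F = ((433188/3125) + (96064/125) * \<mu> + (-(22302/125)) * \<mu>^2 + (-(1062/25)) * \<mu>^3) + \<delta> * ((22548/125) + (13369/75) * \<mu> + (-(791/25)) * \<mu>^2 + (-(113/15)) * \<mu>^3) + \<delta>^2 * ((1967/125) + (149/15) * \<mu> + (-(7/5)) * \<mu>^2 + (-(1/3)) * \<mu>^3) + \<sigma> * ((49224/125) + (42938/75) * \<mu> + (-(4768/25)) * \<mu>^2 + (-(226/15)) * \<mu>^3) + \<sigma> * \<delta> * ((20599/75) + (1544/15) * \<mu> + (-(141/5)) * \<mu>^2 + (-(4/3)) * \<mu>^3) + \<sigma> * \<delta>^2 * ((1459/75) + 4 * \<mu> + (-1) * \<mu>^2) + \<sigma>^2 * ((20492/75) + (1844/15) * \<mu> + (-(254/5)) * \<mu>^2 + (-(4/3)) * \<mu>^3) + \<sigma>^2 * \<delta> * ((394/3) + 12 * \<mu> + (-4) * \<mu>^2) + \<sigma>^2 * \<delta>^2 * ((34/5)) + \<sigma>^3 * ((1196/15) + 8 * \<mu> + (-4) * \<mu>^2) + \<sigma>^3 * \<delta> * ((74/3)) + \<sigma>^3 * \<delta>^2 * ((2/3)) + \<sigma>^4 * ((34/3)) + \<sigma>^4 * \<delta> * ((5/3)) + \<sigma>^5 * ((2/3))"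
    unfolding W m s by algebra
  have g0: "0 \<le> (((433188/3125) + (96064/125) * \<mu> + (-(22302/125)) * \<mu>^2 + (-(1062/25)) * \<mu>^3) :: real)" using \<mu>0 \<mu>sq \<mu>cu by linarith
  have h0: "0 < ((433188/3125) + (96064/125) * \<mu> + (-(22302/125)) * \<mu>^2 + (-(1062/25)) * \<mu>^3)" using \<mu>0 \<mu>sq \<mu>cu by linarith
  have g1: "0 \<le> (((22548/125) + (13369/75) * \<mu> + (-(791/25)) * \<mu>^2 + (-(113/15)) * \<mu>^3) :: real)" using \<mu>0 \<mu>sq \<mu>cu by linarith
  have h1: "0 \<le> \<delta> * ((22548/125) + (13369/75) * \<mu> + (-(791/25)) * \<mu>^2 + (-(113/15)) * \<mu>^3)" using g1 \<sigma>0 \<delta>0 by (intro mult_nonneg_nonneg zero_le_power) auto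
  have g2: "0 \<le> (((1967/125) + (149/15) * \<mu> + (-(7/5)) * \<mu>^2 + (-(1/3)) * \<mu>^3) :: real)" using \<mu>0 \<mu>sq \<mu>cu by linarith
  have h2: "0 \<le> \<delta>^2 * ((1967/125) + (149/15) * \<mu> + (-(7/5)) * \<mu>^2 + (-(1/3)) * \<mu>^3)" using g2 \<sigma>0 \<delta>0 by (intro mult_nonneg_nonneg zero_le_power) auto
  have g3: "0 \<le> (((49224/125) + (42938/75) * \<mu> + (-(4768/25)) * \<mu>^2 + (-(226/15)) * \<mu>^3) :: real)" using \<mu>0 \<mu>sq \<mu>cu by linarith
  have h3: "0 \<le> \<sigma> * ((49224/125) + (42938/75) * \<mu> + (-(4768/25)) * \<mu>^2 + (-(226/15)) * \<mu>^3)" using g3 \<sigma>0 \<delta>0 by (intro mult_nonneg_nonneg zero_le_power) auto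
  have g4: "0 \<le> (((20599/75) + (1544/15) * \<mu> + (-(141/5)) * \<mu>^2 + (-(4/3)) * \<mu>^3) :: real)" using \<mu>0 \<mu>sq \<mu>cu by linarith
  have h4: "0 \<le> \<sigma> * \<delta> * ((20599/75) + (1544/15) * \<mu> + (-(141/5)) * \<mu>^2 + (-(4/3)) * \<mu>^3)" using g4 \<sigma>0 \<delta>0 by (intro mult_nonneg_nonneg zero_le_power) auto
  have g5: "0 \<le> (((1459/75) + 4 * \<mu> + (-1) * \<mu>^2) :: real)" using \<mu>0 \<mu>sq \<mu>cu by linarith
  have h5: "0 \<le> \<sigma> * \<delta>^2 * ((1459/75) + 4 * \<mu> + (-1) * \<mu>^2)" using g5 \<sigma>0 \<delta>0 by (intro mult_nonneg_nonneg zero_le_power) auto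
  have g6: "0 \<le> (((20492/75) + (1844/15) * \<mu> + (-(254/5)) * \<mu>^2 + (-(4/3)) * \<mu>^3) :: real)" using \<mu>0 \<mu>sq \<mu>cu by linarith
  have h6: "0 \<le> \<sigma>^2 * ((20492/75) + (1844/15) * \<mu> + (-(254/5)) * \<mu>^2 + (-(4/3)) * \<mu>^3)" using g6 \<sigma>0 \<delta>0 by (intro mult_nonneg_nonneg zero_le_power) auto
  have g7: "0 \<le> (((394/3) + 12 * \<mu> + (-4) * \<mu>^2) :: real)" using \<mu>0 \<mu>sq \<mu>cu by linarith
  have h7: "0 \<le> \<sigma>^2 * \<delta> * ((394/3) + 12 * \<mu> + (-4) * \<mu>^2)" using g7 \<sigma>0 \<delta>0 by (intro mult_nonneg_nonneg zero_le_power) auto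
  have g8: "0 \<le> (((34/5)) :: real)" using \<mu>0 \<mu>sq \<mu>cu by linarith
  have h8: "0 \<le> \<sigma>^2 * \<delta>^2 * ((34/5))" using g8 \<sigma>0 \<delta>0 by (intro mult_nonneg_nonneg zero_le_power) auto
  have g9: "0 \<le> (((1196/15) + 8 * \<mu> + (-4) * \<mu>^2) :: real)" using \<mu>0 \<mu>sq \<mu>cu by linarith
  have h9: "0 \<le> \<sigma>^3 * ((1196/15) + 8 * \<mu> + (-4) * \<mu>^2)" using g9 \<sigma>0 \<delta>0 by (intro mult_nonneg_nonneg zero_le_power) auto
  have g10: "0 \<le> (((74/3)) :: real)" using \<mu>0 \<mu>sq \<mu>cu by linarith
  have h10: "0 \<le> \<sigma>^3 * \<delta> * ((74/3))" using g10 \<sigma>0 \<delta>0 by (intro mult_nonneg_nonneg zero_le_power) auto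
  have g11: "0 \<le> (((2/3)) :: real)" using \<mu>0 \<mu>sq \<mu>cu by linarith
  have h11: "0 \<le> \<sigma>^3 * \<delta>^2 * ((2/3))" using g11 \<sigma>0 \<delta>0 by (intro mult_nonneg_nonneg zero_le_power) auto
  have g12: "0 \<le> (((34/3)) :: real)" using \<mu>0 \<mu>sq \<mu>cu by linarith
  have h12: "0 \<le> \<sigma>^4 * ((34/3))" using g12 \<sigma>0 \<delta>0 by (intro mult_nonneg_nonneg zero_le_power) auto
  have g13: "0 \<le> (((5/3)) :: real)" using \<mu>0 \<mu>sq \<mu>cu by linarith
  have h13: "0 \<le> \<sigma>^4 * \<delta> * ((5/3))" using g13 \<sigma>0 \<delta>0 by (intro mult_nonneg_nonneg zero_le_power) auto
  have g14: "0 \<le> (((2/3)) :: real)" using \<mu>0 \<mu>sq \<mu>cu by linarith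
  have h14: "0 \<le> \<sigma>^5 * ((2/3))" using g14 \<sigma>0 \<delta>0 by (intro mult_nonneg_nonneg zero_le_power) auto
  show ?thesis unfolding eq using h0 h1 h2 h3 h4 h5 h6 h7 h8 h9 h10 h11 h12 h13 h14 by linarith
qed



lemma sym_sum:
  fixes f :: "int \<Rightarrow> 'a::comm_monoid_add"
  shows "(\<Sum>k\<in>{-int K..int K}. f k) = f 0 + (\<Sum>j\<in>{1..K}. f (int j) + f (- int j))"
proof (induction K)
  case 0 thus ?case by simp
next
  case (Suc K)
  have e: "{-int (Suc K)..int (Suc K)} = insert (int (Suc K)) (insert (- int (Suc K)) {-int K..int K})"
    by auto
  have "(\<Sum>k\<in>{-int (Suc K)..int (Suc K)}. f k) = f (int (Suc K)) + (f (- int (Suc K)) + (\<Sum>k\<in>{-int K..int K}. f k))"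
    unfolding e by (subst sum.insert; simp)+
  also have "\<dots> = f 0 + (\<Sum>j\<in>{1..Suc K}. f (int j) + f (- int j))"
    using Suc by (simp add: add_ac)
  finally show ?case .
qed

lemma sumsq: "6 * (\<Sum>j\<in>{1..K}. (int j)^2) = int K * (int K + 1) * (2 * int K + 1)"
  by (induction K) (simp_all add: algebra_simps power2_eq_square)

context otown begin

lemma main_ineq:
  fixes K :: nat
  assumes PE: "P0 + E0 > 0"
  shows "(real n + (2 * real K + 1)) * (P0 + E0) \<ge>
    of_int (b - a) * ((2 * real K + 1) * P0 - (2 * of_int (b - a + 1) * (real K * (real K + 1) * (2 * real K + 1)) / 3 + (2 * real K + 1)))"
proof -
  define v :: "int \<Rightarrow> int" where "v k = hy S (y0 + k) - hy S y0" for k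
  define \<theta> :: "int \<Rightarrow> int" where "\<theta> k = 2 * v k + 1" for k
  define lev where "lev k = {x\<in>{a..b}. \<theta> k \<le> Dl x}" for k
  define I where "I = {-int K..int K}"
  have finI: "finite I" and cardI: "card I = 2 * K + 1" unfolding I_def by auto
  have v0: "v k \<ge> 0" for k unfolding v_def using y0min by simp
  have sub: "(\<lambda>(k, x). (x, y0 + k)) ` (SIGMA k:I. lev k) \<subseteq> S"
  proof
    fix p assume "p \<in> (\<lambda>(k, x). (x, y0 + k)) ` (SIGMA k:I. lev k)"
    then obtain k x where p: "p = (x, y0 + k)" and x: "x \<in> lev k" by auto
    have xa: "a \<le> x" "x \<le> b" and th: "\<theta> k \<le> Dl x" using x unfolding lev_def by auto
    have "2 * (hy S (y0 + k) - hy S y0) - 2 * \<bar>y0 + k - y0\<bar> < Dl x + (b - a)"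
      using th ab unfolding \<theta>_def v_def by arith
    thus "p \<in> S" using mem[OF xa] p by simp
  qed
  have inj: "inj_on (\<lambda>(k, x). (x, y0 + k)) (SIGMA k:I. lev k)" by (auto simp: inj_on_def)
  have finlev: "finite (lev k)" for k unfolding lev_def by (rule finite_subset[of _ "{a..b}"]) auto
  have "card ((\<lambda>(k, x). (x, y0 + k)) ` (SIGMA k:I. lev k)) \<le> n"
    using card_mono[OF fin sub] cardS by simp
  hence cardsum: "(\<Sum>k\<in>I. card (lev k)) \<le> n"
    using card_image[OF inj] finI finlev by simp
  have each: "(real (card (lev k)) + 1) * (P0 + E0) \<ge> of_int (b - a) * (P0 - of_int (\<theta> k))" for k
  proof -
    have seteq: "{x\<in>{a..b}. of_int (Dl x) \<ge> (of_int (\<theta> k) :: real)} = lev k" unfolding lev_def by simp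
    have th0: "(of_int (\<theta> k) :: real) \<ge> 0" using v0[of k] unfolding \<theta>_def by simp
    have "real (card (lev k)) \<ge> of_int (b - a) * (P0 - of_int (\<theta> k)) / (P0 + E0) - 1"
      using level_count[OF PE th0] unfolding seteq .
    hence "real (card (lev k)) + 1 \<ge> of_int (b - a) * (P0 - of_int (\<theta> k)) / (P0 + E0)" by simp
    thus ?thesis using PE by (simp add: pos_divide_le_eq)
  qed
  have "(\<Sum>k\<in>I. (real (card (lev k)) + 1) * (P0 + E0)) \<ge> (\<Sum>k\<in>I. of_int (b - a) * (P0 - of_int (\<theta> k)))"
    using each by (intro sum_mono) auto
  hence "(real (\<Sum>k\<in>I. card (lev k)) + real (card I)) * (P0 + E0) \<ge> of_int (b - a) * (real (card I) * P0 - (\<Sum>k\<in>I. of_int (\<theta> k)))"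
    by (simp add: sum_distrib_right sum_distrib_left sum.distrib sum_subtractf algebra_simps)
  hence A: "(real n + (2 * real K + 1)) * (P0 + E0) \<ge> of_int (b - a) * ((2 * real K + 1) * P0 - (\<Sum>k\<in>I. of_int (\<theta> k)))"
  proof -
    assume h: "(real (\<Sum>k\<in>I. card (lev k)) + real (card I)) * (P0 + E0) \<ge> of_int (b - a) * (real (card I) * P0 - (\<Sum>k\<in>I. of_int (\<theta> k)))"
    have "real (\<Sum>k\<in>I. card (lev k)) \<le> real n" using cardsum by (simp only: of_nat_le_iff)
    hence "(real (\<Sum>k\<in>I. card (lev k)) + real (card I)) * (P0 + E0) \<le> (real n + real (card I)) * (P0 + E0)"
      using PE by (intro mult_right_mono) auto
    moreover have cI: "real (card I) = 2 * real K + 1" using cardI by simp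
    ultimately show ?thesis using h unfolding cI by linarith
  qed
  have "(\<Sum>k\<in>I. v k) = v 0 + (\<Sum>j\<in>{1..K}. v (int j) + v (- int j))" unfolding I_def by (rule sym_sum)
  also have "\<dots> \<le> 0 + (\<Sum>j\<in>{1..K}. 2 * (b - a + 1) * (int j)^2)"
  proof -
    have "v (int j) + v (- int j) \<le> 2 * (b - a + 1) * (int j)^2" for j
      using pair_bound[of j] unfolding v_def by simp
    thus ?thesis unfolding v_def by (intro add_mono sum_mono) auto
  qed
  finally have sv: "(\<Sum>k\<in>I. v k) \<le> (\<Sum>j\<in>{1..K}. 2 * (b - a + 1) * (int j)^2)" by simp
  have eqs: "(\<Sum>j\<in>{1..K}. 2 * (b - a + 1) * (int j)^2) = 2 * (b - a + 1) * (\<Sum>j\<in>{1..K}. (int j)^2)"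
    by (rule sum_distrib_left[symmetric])
  have "6 * (\<Sum>k\<in>I. v k) \<le> 6 * (2 * (b - a + 1) * (\<Sum>j\<in>{1..K}. (int j)^2))"
    using sv unfolding eqs by simp
  also have "\<dots> = 2 * (b - a + 1) * (6 * (\<Sum>j\<in>{1..K}. (int j)^2))" by (simp only: mult_ac)
  finally have "6 * (\<Sum>k\<in>I. v k) \<le> 2 * (b - a + 1) * (6 * (\<Sum>j\<in>{1..K}. (int j)^2))" .
  hence "6 * (\<Sum>k\<in>I. v k) \<le> 2 * (b - a + 1) * (int K * (int K + 1) * (2 * int K + 1))"
    by (simp only: sumsq)
  hence "real_of_int (6 * (\<Sum>k\<in>I. v k)) \<le> real_of_int (2 * (b - a + 1) * (int K * (int K + 1) * (2 * int K + 1)))"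
    by (simp only: of_int_le_iff)
  hence vs: "6 * (\<Sum>k\<in>I. real_of_int (v k)) \<le> 2 * of_int (b - a + 1) * (real K * (real K + 1) * (2 * real K + 1))"
    by simp
  have "(\<Sum>k\<in>I. real_of_int (\<theta> k)) = 2 * (\<Sum>k\<in>I. real_of_int (v k)) + (2 * real K + 1)"
    unfolding \<theta>_def using cardI by (simp add: sum.distrib sum_distrib_left)
  hence ts: "(\<Sum>k\<in>I. real_of_int (\<theta> k)) \<le> 2 * of_int (b - a + 1) * (real K * (real K + 1) * (2 * real K + 1)) / 3 + (2 * real K + 1)"
    using vs by simp
  have "of_int (b - a) * ((2 * real K + 1) * P0 - (\<Sum>k\<in>I. of_int (\<theta> k))) \<ge>
    of_int (b - a) * ((2 * real K + 1) * P0 - (2 * of_int (b - a + 1) * (real K * (real K + 1) * (2 * real K + 1)) / 3 + (2 * real K + 1)))"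
    using ts ab by (intro mult_left_mono) auto
  thus ?thesis using A by linarith
qed

end



lemma gx_nonneg: "gx S x \<ge> 0" unfolding gx_def by (intro sum_nonneg) auto
lemma hy_nonneg: "hy S y \<ge> 0" unfolding hy_def by (intro sum_nonneg) auto

lemma small_n: assumes "1 \<le> n" "n \<le> (11::nat)" shows "real n \<le> 2 * sqrt (real n) + 5"
proof (cases "n \<le> 5")
  case True
  hence "real n \<le> 5" by simp
  thus ?thesis using real_sqrt_ge_zero[of "real n"] by linarith
next
  case False
  hence "(real n - 5)^2 \<le> 4 * real n"
  proof -
    have "n \<in> {6,7,8,9,10,11}" using False assms by auto
    thus ?thesis by (auto simp: power2_eq_square)
  qed
  hence "real n - 5 \<le> sqrt (4 * real n)" by (intro real_le_rsqrt)
  also have "sqrt (4 * real n) = 2 * sqrt (real n)" by (simp add: real_sqrt_mult)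
  finally show ?thesis by simp
qed

lemma width_bound:
  assumes opt: "optimal_town n S" and n1: "1 \<le> n"
  shows "real (width S) \<le> 2 * sqrt (real n) + 5"
proof -
  obtain x0 where x0: "\<And>x. gx S x0 \<le> gx S x"
  proof -
    obtain x where "\<forall>y. nat (gx S x) \<le> nat (gx S y)"
      using ex_has_least_nat[of "\<lambda>x. True" 0 "\<lambda>x. nat (gx S x)"] by auto
    hence "\<And>y. gx S x \<le> gx S y" using gx_nonneg by (metis nat_le_eq_zle)
    thus ?thesis using that by blast
  qed
  obtain y0 where y0: "\<And>y. hy S y0 \<le> hy S y"
  proof -
    obtain x where "\<forall>y. nat (hy S x) \<le> nat (hy S y)"
      using ex_has_least_nat[of "\<lambda>x. True" 0 "\<lambda>x. nat (hy S x)"] by auto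
    hence "\<And>y. hy S x \<le> hy S y" using hy_nonneg by (metis nat_le_eq_zle)
    thus ?thesis using that by blast
  qed
  interpret otown n S x0 y0 using opt n1 x0 y0 by unfold_locales auto
  define Wr where "Wr = real_of_int (b - a + 1)"
  have wW: "real (width S) \<le> Wr" unfolding Wr_def using width_le by linarith
  have "Wr \<le> 2 * sqrt (real n) + 5"
  proof (rule ccontr)
    assume "\<not> Wr \<le> 2 * sqrt (real n) + 5"
    hence big: "Wr > 2 * sqrt (real n) + 5" by simp
    have Wn: "Wr \<le> real n" unfolding Wr_def using n_ge_W by linarith
    show False
    proof (cases "n \<le> 11")
      case True
      thus False using small_n[OF n1 True] big Wn by linarith
    next
      case False
      hence n12: "real n \<ge> 12" by simp
      define s where "s = sqrt (real n)"
      have ns: "real n = s^2" unfolding s_def by simp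
      have s0: "s \<ge> 0" unfolding s_def by simp
      have s17: "17/5 \<le> s" unfolding s_def by (rule real_le_rsqrt) (use n12 in \<open>simp add: power2_eq_square\<close>)
      have s17': "17 \<le> 5 * s" using s17 by simp
      define K where "K = nat \<lfloor>(s - 1) / 2\<rfloor>"
      define m where "m = 2 * real K + 1"
      have fl0: "\<lfloor>(s - 1) / 2\<rfloor> \<ge> 0" using s17' by simp
      have Kr: "real K = of_int \<lfloor>(s - 1) / 2\<rfloor>" unfolding K_def using fl0 by simp
      have "real_of_int \<lfloor>(s - 1) / 2\<rfloor> * 2 \<le> s - 1"
        using of_int_floor_le[of "(s - 1) / 2"] by (simp only: le_divide_eq_numeral1)
      hence m1: "m \<le> s" unfolding m_def Kr by linarith
      have "s - 1 < (real_of_int \<lfloor>(s - 1) / 2\<rfloor> + 1) * 2"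
        using real_of_int_floor_add_one_gt[of "(s - 1) / 2"] by (simp only: divide_less_eq_numeral1)
      hence "s - 1 < real_of_int \<lfloor>(s - 1) / 2\<rfloor> * 2 + 2" by (simp add: algebra_simps)
      hence m2: "s - 2 \<le> m" unfolding m_def Kr by linarith
      have Kr2: "real K = (m - 1) / 2" unfolding m_def by simp
      have ba: "of_int (b - a) = Wr - 1" unfolding Wr_def by simp
      have WrP: "Wr \<ge> 2 * s + 5" using big s_def by simp
      have P0e: "P0 = s^2 * (Wr - 3) / 2" unfolding P0_def ns ba by simp
      have E0e: "E0 = s^2 - Wr" unfolding E0_def ns Wr_def by simp
      define X where "X = s^2 * (Wr - 1)"
      have "X \<ge> 12 * (Wr - 1)" unfolding X_def using n12 ns WrP s17 by (intro mult_right_mono) auto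
      hence "X \<ge> 12 * Wr - 12" by (simp add: algebra_simps)
      hence "X - 2 * Wr > 0" using WrP s17' by linarith
      hence pos: "s^2 * (Wr - 1) - 2 * Wr > 0" unfolding X_def .
      have "P0 + E0 = (s^2 * (Wr - 1) - 2 * Wr) / 2" unfolding P0e E0e by (simp add: field_simps)
      hence PE: "P0 + E0 > 0" using pos by simp
      have mi: "(real n + (2 * real K + 1)) * (P0 + E0) \<ge>
        of_int (b - a) * ((2 * real K + 1) * P0 - (2 * of_int (b - a + 1) * (real K * (real K + 1) * (2 * real K + 1)) / 3 + (2 * real K + 1)))"
        by (rule main_ineq[OF PE])
      have pp: "(Wr-1)*(m*s^2*(Wr-3) - Wr*m*(m^2-1)/3 - 2*m) - (s^2+m)*(s^2*(Wr-1) - 2*Wr) > 0"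
        by (rule poly_pos) (use s17 WrP m1 m2 in auto)
      have id1: "(real n + (2 * real K + 1)) * (P0 + E0) = (s^2 + m) * (s^2 * (Wr - 1) - 2 * Wr) / 2"
        unfolding ns P0e E0e Kr2 by (simp add: field_simps)
      have id2: "of_int (b - a) * ((2 * real K + 1) * P0 - (2 * of_int (b - a + 1) * (real K * (real K + 1) * (2 * real K + 1)) / 3 + (2 * real K + 1)))
         = (Wr-1)*(m*s^2*(Wr-3) - Wr*m*(m^2-1)/3 - 2*m) / 2"
        unfolding ba P0e Kr2 Wr_def[symmetric] by (simp add: field_simps power2_eq_square)
      define A where "A = (Wr-1)*(m*s^2*(Wr-3) - Wr*m*(m^2-1)/3 - 2*m)"
      define B where "B = (s^2+m)*(s^2*(Wr-1) - 2*Wr)"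
      have "A / 2 \<le> B / 2" using mi unfolding id1 id2 A_def B_def .
      hence "A \<le> B" by simp
      moreover have "0 < A - B" using pp unfolding A_def B_def .
      ultimately show False by linarith
    qed
  qed
  thus ?thesis using wW by linarith
qed

lemma inj_swap: "inj_on prod.swap (A :: point set)" by (auto simp: inj_on_def)

lemma manhattan_swap: "manhattan (prod.swap s) (prod.swap t) = manhattan s t"
  unfolding manhattan_def by simp

lemma cost_swap: "town_cost (prod.swap ` T) = town_cost T"
proof -
  have inj: "inj_on prod.swap A" for A :: "point set" by (auto simp: inj_on_def)
  have "(\<Sum>s\<in>prod.swap ` T. \<Sum>t\<in>prod.swap ` T. manhattan s t) = (\<Sum>s\<in>T. \<Sum>t\<in>T. manhattan (prod.swap s) (prod.swap t))"
    by (simp add: sum.reindex[OF inj])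
  thus ?thesis unfolding town_cost_def manhattan_swap by simp
qed

lemma town_swap: "is_town n (prod.swap ` T) \<longleftrightarrow> is_town n T"
  unfolding is_town_def using inj_swap[of T] by (simp add: finite_image_iff card_image)

lemma opt_swap: assumes "optimal_town n S" shows "optimal_town n (prod.swap ` S)"
  unfolding optimal_town_def
proof (intro conjI allI impI)
  show "is_town n (prod.swap ` S)" using assms town_swap unfolding optimal_town_def by blast
  fix T assume "is_town n T"
  hence "is_town n (prod.swap ` T)" using town_swap by blast
  hence "town_cost S \<le> town_cost (prod.swap ` T)" using assms unfolding optimal_town_def by blast
  thus "town_cost (prod.swap ` S) \<le> town_cost T" by (simp add: cost_swap)
qed

lemma width_swap: "width (prod.swap ` S) = height S"
proof -
  have "row (prod.swap ` S) i = prod.swap ` col S i" for i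
    unfolding row_def col_def by force
  hence "card (row (prod.swap ` S) i) = card (col S i)" for i
    using inj_swap by (simp add: card_image)
  thus ?thesis unfolding width_def height_def by simp
qed

theorem lemma5:
  fixes n :: nat and S :: "point set"
  assumes "n \<ge> 1" and "optimal_town n S"
  shows "real (max (width S) (height S)) \<le> 2 * sqrt (real n) + 5"
proof -
  have w: "real (width S) \<le> 2 * sqrt (real n) + 5" by (rule width_bound) (use assms in auto)
  have "real (width (prod.swap ` S)) \<le> 2 * sqrt (real n) + 5"
    by (rule width_bound[OF opt_swap]) (use assms in auto)
  hence h: "real (height S) \<le> 2 * sqrt (real n) + 5" by (simp add: width_swap)
  show ?thesis using w h by (simp add: max_def)
qed



end
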